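(* Let $G$ be a simple graph with $m$ edges and girth $g(G)\ge 5$. Then the number $p(G;4)$ of $4$-matchings of $G$ equals $$\frac{1}{24}m^4+\frac14 m^3+\frac{19}{24}m^2-\frac{11}{4}m+\frac18 M_1(G)^2+\frac13 mF(G)-\frac14 m^2M_1(G)+mM_2(G)+\frac14 M_1^4(G)-2M_2(G)-\frac54 mM_1(G)+\frac72 M_1(G)-EM_2(G)-\frac32 F(G),$$ where $M_1(G)^2$ is the square of the number $M_1(G)$.
   Context: All graphs are finite, simple and undirected. A $k$-matching is a set of $k$ pairwise vertex-disjoint edges; $p(G;k)$ is the number of $k$-matchings in $G$. $d_G(v)$ is the degree of $v$; the girth is the length of a shortest cycle (infinite if acyclic). $M_1^\alpha(G)=\sum_v d_G(v)^\alpha$ (exponent on degrees), $M_1=M_1^2$, $F=M_1^3$, $M_1^4(G)=\sum_v d_G(v)^4$; $M_2(G)=\sum_{uv\in E(G)}d_G(u)d_G(v)$. For an edge $e=uv$, $d_G(e)=d_G(u)+d_G(v)-2$; $EM_2(G)=\sum_{e\sim f}d_G(e)d_G(f)$, the sum over unordered pairs of distinct edges sharing a vertex. *)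

theory Defs
  imports Complex_Main "HOL-Library.Extended_Nat"
begin

definition simple_graph :: "'a set \<Rightarrow> 'a set set \<Rightarrow> bool" where
  "simple_graph V E \<longleftrightarrow> finite V \<and> (\<forall>e\<in>E. \<exists>u v. e = {u, v} \<and> u \<noteq> v \<and> u \<in> V \<and> v \<in> V)"

definition degree :: "'a set set \<Rightarrow> 'a \<Rightarrow> nat" where
  "degree E v = card {e \<in> E. v \<in> e}"

definition matchings :: "'a set set \<Rightarrow> nat \<Rightarrow> 'a set set set" where
  "matchings E k = {M. M \<subseteq> E \<and> card M = k \<and> pairwise disjnt M}"

definition num_matchings :: "'a set set \<Rightarrow> nat \<Rightarrow> nat" where
  "num_matchings E k = card (matchings E k)"

definition is_cycle :: "'a set set \<Rightarrow> 'a list \<Rightarrow> bool" where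
  "is_cycle E cs \<longleftrightarrow> length cs \<ge> 3 \<and> distinct cs \<and>
     (\<forall>i < length cs. {cs ! i, cs ! ((i + 1) mod length cs)} \<in> E)"

definition girth :: "'a set set \<Rightarrow> enat" where
  "girth E = (INF cs \<in> {cs. is_cycle E cs}. enat (length cs))"

text \<open>Generalised first Zagreb index M_1^alpha(G) = sum of d(v)^alpha.\<close>
definition M1_pow :: "'a set \<Rightarrow> 'a set set \<Rightarrow> nat \<Rightarrow> real" where
  "M1_pow V E a = (\<Sum>v\<in>V. real (degree E v) ^ a)"

definition M2 :: "'a set set \<Rightarrow> real" where
  "M2 E = (\<Sum>e\<in>E. \<Prod>v\<in>e. real (degree E v))"

definition edge_degree :: "'a set set \<Rightarrow> 'a set \<Rightarrow> real" where
  "edge_degree E e = (\<Sum>v\<in>e. real (degree E v)) - 2"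

definition EM2 :: "'a set set \<Rightarrow> real" where
  "EM2 E = (\<Sum>P\<in>{{e, f} | e f. e \<in> E \<and> f \<in> E \<and> e \<noteq> f \<and> e \<inter> f \<noteq> {}}.
              \<Prod>x\<in>P. edge_degree E x)"

end

theory Submission
  imports Defs
begin


lemma match0: "finite E \<Longrightarrow> matchings E 0 = {{}}"
  by (auto simp: matchings_def card_eq_0_iff dest: finite_subset) 

lemma match_fin: "finite E \<Longrightarrow> finite (matchings E k)"
  unfolding matchings_def by (rule finite_subset[of _ "Pow E"]) auto

lemma match_rec:
  assumes fin: "finite E" and ne: "\<forall>e\<in>E. e \<noteq> {}"
  shows "Suc k * card (matchings E (Suc k)) = (\<Sum>e\<in>E. card (matchings {f\<in>E. disjnt e f} k))"
proof -
  let ?Mt = "matchings E (Suc k)"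
  have finM: "finite ?Mt" using match_fin fin by blast
  have "Suc k * card ?Mt = (\<Sum>M\<in>?Mt. card M)"
    by (simp add: matchings_def)
  also have "\<dots> = (\<Sum>M\<in>?Mt. \<Sum>e\<in>E. if e \<in> M then 1 else 0)"
  proof (rule sum.cong[OF refl])
    fix M assume "M \<in> ?Mt"
    hence "M \<subseteq> E" by (simp add: matchings_def)
    hence "E \<inter> M = M" by blast
    thus "card M = (\<Sum>e\<in>E. if e \<in> M then 1 else 0)"
      using sum.inter_restrict[OF fin, of "\<lambda>_. 1::nat" M] by simp
  qed
  also have "\<dots> = (\<Sum>e\<in>E. \<Sum>M\<in>?Mt. if e \<in> M then 1 else 0)"
    by (rule sum.swap)
  also have "\<dots> = (\<Sum>e\<in>E. card {M\<in>?Mt. e \<in> M})"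
    by (simp add: sum.If_cases[OF finM] Int_def)
  also have "\<dots> = (\<Sum>e\<in>E. card (matchings {f\<in>E. disjnt e f} k))"
  proof (rule sum.cong[OF refl])
    fix e assume eE: "e \<in> E"
    have "bij_betw (\<lambda>N. insert e N) (matchings {f\<in>E. disjnt e f} k) {M\<in>?Mt. e \<in> M}"
    proof (rule bij_betw_byWitness[where f' = "\<lambda>M. M - {e}"])
      show "\<forall>N\<in>matchings {f\<in>E. disjnt e f} k. insert e N - {e} = N"
        using ne eE by (auto simp: matchings_def disjnt_def)
      show "\<forall>M\<in>{M\<in>?Mt. e \<in> M}. insert e (M - {e}) = M" by auto
      show "(\<lambda>N. insert e N) ` matchings {f\<in>E. disjnt e f} k \<subseteq> {M\<in>?Mt. e \<in> M}"
      proof safe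
        fix N assume N: "N \<in> matchings {f\<in>E. disjnt e f} k"
        have eN: "e \<notin> N" using N ne eE by (auto simp: matchings_def disjnt_def)
        have fN: "finite N" using N fin by (auto simp: matchings_def dest: finite_subset)
        show "insert e N \<in> ?Mt" using N eN fN eE
          by (auto simp: matchings_def pairwise_insert disjnt_sym)
      qed
      show "(\<lambda>M. M - {e}) ` {M\<in>?Mt. e \<in> M} \<subseteq> matchings {f\<in>E. disjnt e f} k"
      proof safe
        fix M assume M: "M \<in> ?Mt" "e \<in> M"
        show "M - {e} \<in> matchings {f\<in>E. disjnt e f} k"
          using M by (auto simp: matchings_def pairwise_def intro: pairwise_subset)
      qed
    qed
    thus "card {M\<in>?Mt. e \<in> M} = card (matchings {f\<in>E. disjnt e f} k)"
      using bij_betw_same_card by metis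
  qed
  finally show ?thesis .
qed



definition dj :: "'a set \<Rightarrow> 'a set \<Rightarrow> real" where
  "dj a b = (if disjnt a b then 1 else 0)"
definition mt :: "'a set \<Rightarrow> 'a set \<Rightarrow> real" where
  "mt a b = (if a \<inter> b \<noteq> {} then 1 else 0)"
definition vs :: "'a set set \<Rightarrow> ('a set \<Rightarrow> real) \<Rightarrow> 'a \<Rightarrow> real" where
  "vs E g v = (\<Sum>e\<in>E. if v \<in> e then g e else 0)"
definition sd :: "'a set set \<Rightarrow> 'a set \<Rightarrow> real" where
  "sd E e = (\<Sum>v\<in>e. real (degree E v))"
definition xc :: "'a set set \<Rightarrow> 'a set \<Rightarrow> 'a set \<Rightarrow> real" where
  "xc E a b = (\<Sum>h\<in>E. mt h a * mt h b)"

definition QQ :: "'a set \<Rightarrow> 'a set set \<Rightarrow> real" where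
  "QQ W F = (\<Sum>v\<in>W. vs F (sd F) v * vs F (sd F) v)"
definition RR :: "'a set set \<Rightarrow> real" where
  "RR F = (\<Sum>e\<in>F. (\<Prod>v\<in>e. real (degree F v)) * sd F e)"

lemma dj_mt: "dj a b = 1 - mt a b" by (simp add: dj_def mt_def disjnt_def)
lemma dj_sym: "dj a b = dj b a" by (simp add: dj_def disjnt_sym)
lemma mt_sym: "mt a b = mt b a" by (simp add: mt_def Int_commute)

context
  fixes V :: "'a set" and E :: "'a set set"
  assumes sg: "simple_graph V E"
begin

lemma edge: "e \<in> E \<Longrightarrow> \<exists>u v. e = {u,v} \<and> u \<noteq> v \<and> u \<in> V \<and> v \<in> V"
  using sg by (auto simp: simple_graph_def)

lemma finV: "finite V" using sg by (simp add: simple_graph_def)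

lemma esub: "e \<in> E \<Longrightarrow> e \<subseteq> V" using edge by blast

lemma finE: "finite E"
proof -
  have "E \<subseteq> Pow V" using esub by blast
  thus ?thesis by (rule finite_subset) (simp add: finV)
qed

lemma card_e: "e \<in> E \<Longrightarrow> card e = 2" using edge by fastforce

lemma fin_e: "e \<in> E \<Longrightarrow> finite e" using edge by fastforce

lemma ne_e: "e \<in> E \<Longrightarrow> e \<noteq> {}" using edge by fastforce

lemma card_int: assumes "e \<in> E" "f \<in> E"
  shows "real (card (e \<inter> f)) = mt e f + (if e = f then 1 else 0)"
proof (cases "e = f")
  case True thus ?thesis using card_e assms ne_e by (simp add: mt_def)
next
  case False
  show ?thesis
  proof (cases "e \<inter> f = {}")
    case True thus ?thesis using False by (simp add: mt_def)
  next
    case ne: False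
    have fin: "finite (e \<inter> f)" using fin_e assms by blast
    have "e \<inter> f \<noteq> e"
    proof
      assume "e \<inter> f = e"
      hence "e \<subseteq> f" by blast
      thus False using card_e assms False fin_e card_subset_eq by metis
    qed
    hence "card (e \<inter> f) < card e"
      using fin_e[OF assms(1)] by (meson Int_lower1 psubsetI psubset_card_mono)
    moreover have "card (e \<inter> f) > 0" using ne fin by (simp add: card_gt_0_iff)
    ultimately have "card (e \<inter> f) = 1" using card_e[OF assms(1)] by linarith
    thus ?thesis using ne False by (simp add: mt_def)
  qed
qed

lemma deg_vs: "real (degree E v) = vs E (\<lambda>_. 1) v"
  unfolding degree_def vs_def
  using sum.inter_filter[OF finE, of "\<lambda>_. 1::real" "\<lambda>e. v \<in> e"] by simp

lemma DC2: "(\<Sum>v\<in>V. vs E g v * \<phi> v) = (\<Sum>e\<in>E. g e * (\<Sum>v\<in>e. \<phi> v))"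
proof -
  have "(\<Sum>v\<in>V. vs E g v * \<phi> v) = (\<Sum>v\<in>V. \<Sum>e\<in>E. (if v \<in> e then g e * \<phi> v else 0))"
    unfolding vs_def sum_distrib_right by (intro sum.cong) auto
  also have "\<dots> = (\<Sum>e\<in>E. \<Sum>v\<in>V. (if v \<in> e then g e * \<phi> v else 0))"
    by (rule sum.swap)
  also have "\<dots> = (\<Sum>e\<in>E. g e * (\<Sum>v\<in>e. \<phi> v))"
  proof (rule sum.cong[OF refl])
    fix e assume "e \<in> E"
    hence "V \<inter> e = e" using esub by blast
    hence "(\<Sum>v\<in>V. (if v \<in> e then g e * \<phi> v else 0)) = (\<Sum>v\<in>e. g e * \<phi> v)"
      using sum.inter_restrict[OF finV, of "\<lambda>v. g e * \<phi> v" e] by simp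
    thus "(\<Sum>v\<in>V. (if v \<in> e then g e * \<phi> v else 0)) = g e * (\<Sum>v\<in>e. \<phi> v)"
      by (simp add: sum_distrib_left)
  qed
  finally show ?thesis .
qed

lemma VSE: assumes "e \<in> E" shows "(\<Sum>v\<in>e. vs E h v) = (\<Sum>f\<in>E. h f * real (card (e \<inter> f)))"
proof -
  have "(\<Sum>v\<in>e. vs E h v) = (\<Sum>f\<in>E. \<Sum>v\<in>e. if v \<in> f then h f else 0)"
    unfolding vs_def by (rule sum.swap)
  also have "\<dots> = (\<Sum>f\<in>E. h f * real (card (e \<inter> f)))"
  proof (rule sum.cong[OF refl])
    fix f assume "f \<in> E"
    have "(\<Sum>v\<in>e. if v \<in> f then h f else 0) = (\<Sum>v\<in>e \<inter> f. h f)"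
      using sum.inter_restrict[OF fin_e[OF assms], of "\<lambda>_. h f" f] by simp
    thus "(\<Sum>v\<in>e. if v \<in> f then h f else 0) = h f * real (card (e \<inter> f))" by simp
  qed
  finally show ?thesis .
qed

lemma L1: "(\<Sum>e\<in>E. \<Sum>f\<in>E. mt e f * g e * h f) = (\<Sum>v\<in>V. vs E g v * vs E h v) - (\<Sum>e\<in>E. g e * h e)"
proof -
  have "(\<Sum>v\<in>V. vs E g v * vs E h v) = (\<Sum>e\<in>E. g e * (\<Sum>f\<in>E. h f * real (card (e \<inter> f))))"
    using DC2[of g "vs E h"] VSE by (simp cong: sum.cong)
  also have "\<dots> = (\<Sum>e\<in>E. \<Sum>f\<in>E. mt e f * g e * h f + (if e = f then g e * h f else 0))"
    by (rule sum.cong[OF refl], simp add: sum_distrib_left card_int algebra_simps cong: sum.cong, intro sum.cong, auto)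
  also have "\<dots> = (\<Sum>e\<in>E. \<Sum>f\<in>E. mt e f * g e * h f) + (\<Sum>e\<in>E. g e * h e)"
    by (simp add: sum.distrib finE)
  finally show ?thesis by simp
qed

lemma DC1: "(\<Sum>e\<in>E. \<Sum>v\<in>e. \<phi> v) = (\<Sum>v\<in>V. real (degree E v) * \<phi> v)"
  using DC2[of "\<lambda>_. 1" \<phi>] by (simp add: deg_vs)

lemma vs1_edge: "(\<Sum>v\<in>e. vs E (\<lambda>_. 1) v) = sd E e"
  by (simp add: sd_def deg_vs)

lemma ev_S1: "(\<Sum>e\<in>E. sd E e) = M1_pow V E 2"
  unfolding sd_def M1_pow_def DC1 by (simp add: power2_eq_square)

lemma ev_S2: "(\<Sum>e\<in>E. sd E e * sd E e) = M1_pow V E 3 + 2 * M2 E"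
proof -
  have "(\<Sum>e\<in>E. sd E e * sd E e) = (\<Sum>e\<in>E. (\<Sum>v\<in>e. real (degree E v) * real (degree E v)) + 2 * (\<Prod>v\<in>e. real (degree E v)))"
  proof (rule sum.cong[OF refl])
    fix e assume "e \<in> E"
    then obtain u v where "e = {u,v}" "u \<noteq> v" using edge by blast
    thus "sd E e * sd E e = (\<Sum>v\<in>e. real (degree E v) * real (degree E v)) + 2 * (\<Prod>v\<in>e. real (degree E v))"
      by (simp add: sd_def algebra_simps)
  qed
  also have "\<dots> = M1_pow V E 3 + 2 * M2 E"
    by (simp add: sum.distrib DC1 M1_pow_def M2_def sum_distrib_left power3_eq_cube mult_ac)
  finally show ?thesis .
qed


lemma ev_S3: "(\<Sum>e\<in>E. sd E e * sd E e * sd E e) = M1_pow V E 4 + 3 * RR E"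
proof -
  have "(\<Sum>e\<in>E. sd E e * sd E e * sd E e) = (\<Sum>e\<in>E. (\<Sum>v\<in>e. real (degree E v) * real (degree E v) * real (degree E v)) + 3 * ((\<Prod>v\<in>e. real (degree E v)) * sd E e))"
  proof (rule sum.cong[OF refl])
    fix e assume "e \<in> E"
    then obtain u v where "e = {u,v}" "u \<noteq> v" using edge by blast
    thus "sd E e * sd E e * sd E e = (\<Sum>v\<in>e. real (degree E v) * real (degree E v) * real (degree E v)) + 3 * ((\<Prod>v\<in>e. real (degree E v)) * sd E e)"
      by (simp add: sd_def algebra_simps)
  qed
  also have "\<dots> = M1_pow V E 4 + 3 * RR E"
    by (simp add: sum.distrib DC1 M1_pow_def RR_def sum_distrib_left power4_eq_xxxx mult_ac)
  finally show ?thesis .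
qed

lemma ev_d2G: "(\<Sum>v\<in>V. vs E (sd E) v * (real (degree E v) * real (degree E v))) = M1_pow V E 4 + RR E"
proof -
  have "(\<Sum>v\<in>V. vs E (sd E) v * (real (degree E v) * real (degree E v))) =
     (\<Sum>e\<in>E. sd E e * (\<Sum>v\<in>e. real (degree E v) * real (degree E v)))" by (rule DC2)
  also have "\<dots> = (\<Sum>e\<in>E. (\<Sum>v\<in>e. real (degree E v) * real (degree E v) * real (degree E v)) + ((\<Prod>v\<in>e. real (degree E v)) * sd E e))"
  proof (rule sum.cong[OF refl])
    fix e assume "e \<in> E"
    then obtain u v where "e = {u,v}" "u \<noteq> v" using edge by blast
    thus "sd E e * (\<Sum>v\<in>e. real (degree E v) * real (degree E v)) = (\<Sum>v\<in>e. real (degree E v) * real (degree E v) * real (degree E v)) + ((\<Prod>v\<in>e. real (degree E v)) * sd E e)"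
      by (simp add: sd_def algebra_simps)
  qed
  also have "\<dots> = M1_pow V E 4 + RR E"
    by (simp add: sum.distrib DC1 M1_pow_def RR_def power4_eq_xxxx mult_ac)
  finally show ?thesis .
qed

lemma ev_dG: "(\<Sum>v\<in>V. vs E (sd E) v * vs E (\<lambda>_. 1) v) = (\<Sum>e\<in>E. sd E e * sd E e)"
  using DC2[of "sd E" "vs E (\<lambda>_. 1)"] by (simp add: vs1_edge)

lemma ev_dG2: "(\<Sum>v\<in>V. vs E (\<lambda>e. sd E e * sd E e) v * vs E (\<lambda>_. 1) v) = (\<Sum>e\<in>E. sd E e * sd E e * sd E e)"
  using DC2[of "\<lambda>e. sd E e * sd E e" "vs E (\<lambda>_. 1)"] by (simp add: vs1_edge)

lemma ev_X0: "(\<Sum>h\<in>E. \<Sum>a\<in>h. \<Sum>b\<in>h - {a}. (vs E (\<lambda>_. 1) a - 1) * (vs E (\<lambda>_. 1) b - 1))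
   = 2 * M2 E - 2 * (\<Sum>e\<in>E. sd E e) + 2 * real (card E)"
proof -
  have "(\<Sum>h\<in>E. \<Sum>a\<in>h. \<Sum>b\<in>h - {a}. (vs E (\<lambda>_. 1) a - 1) * (vs E (\<lambda>_. 1) b - 1))
     = (\<Sum>h\<in>E. 2 * (\<Prod>v\<in>h. real (degree E v)) - 2 * sd E h + 2)"
  proof (rule sum.cong[OF refl])
    fix e assume "e \<in> E"
    then obtain u v where "e = {u,v}" "u \<noteq> v" using edge by blast
    thus "(\<Sum>a\<in>e. \<Sum>b\<in>e - {a}. (vs E (\<lambda>_. 1) a - 1) * (vs E (\<lambda>_. 1) b - 1)) =
        2 * (\<Prod>v\<in>e. real (degree E v)) - 2 * sd E e + 2"
      by (simp add: sd_def algebra_simps insert_Diff_if flip: deg_vs)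
  qed
  also have "\<dots> = 2 * M2 E - 2 * (\<Sum>e\<in>E. sd E e) + 2 * real (card E)"
    by (simp add: sum.distrib sum_subtractf M2_def sum_distrib_left)
  finally show ?thesis .
qed


lemma ev_X1: "(\<Sum>h\<in>E. \<Sum>a\<in>h. \<Sum>b\<in>h - {a}. (vs E (sd E) a - sd E h) * (vs E (\<lambda>_. 1) b - 1))
   = QQ V E - (M1_pow V E 4 + RR E) - 2 * (\<Sum>e\<in>E. sd E e * sd E e) + 2 * (\<Sum>e\<in>E. sd E e)"
proof -
  let ?G = "vs E (sd E)"
  let ?d = "\<lambda>v. real (degree E v)"
  have "(\<Sum>h\<in>E. \<Sum>a\<in>h. \<Sum>b\<in>h - {a}. (?G a - sd E h) * (vs E (\<lambda>_. 1) b - 1))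
     = (\<Sum>h\<in>E. sd E h * (\<Sum>a\<in>h. ?G a) - (\<Sum>a\<in>h. ?G a * ?d a) - (\<Sum>a\<in>h. ?G a) - sd E h * sd E h + 2 * sd E h)"
  proof (rule sum.cong[OF refl])
    fix e assume "e \<in> E"
    then obtain u v where "e = {u,v}" "u \<noteq> v" using edge by blast
    thus "(\<Sum>a\<in>e. \<Sum>b\<in>e - {a}. (?G a - sd E e) * (vs E (\<lambda>_. 1) b - 1)) =
       sd E e * (\<Sum>a\<in>e. ?G a) - (\<Sum>a\<in>e. ?G a * ?d a) - (\<Sum>a\<in>e. ?G a) - sd E e * sd E e + 2 * sd E e"
      by (simp add: sd_def algebra_simps insert_Diff_if flip: deg_vs)
  qed
  also have "\<dots> = (\<Sum>h\<in>E. sd E h * (\<Sum>a\<in>h. ?G a)) - (\<Sum>h\<in>E. \<Sum>a\<in>h. ?G a * ?d a) - (\<Sum>h\<in>E. \<Sum>a\<in>h. ?G a)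
       - (\<Sum>e\<in>E. sd E e * sd E e) + 2 * (\<Sum>e\<in>E. sd E e)"
    by (simp add: sum.distrib sum_subtractf sum_distrib_left)
  also have "(\<Sum>h\<in>E. sd E h * (\<Sum>a\<in>h. ?G a)) = QQ V E"
    unfolding QQ_def using DC2[of "sd E" ?G] by simp
  also have "(\<Sum>h\<in>E. \<Sum>a\<in>h. ?G a * ?d a) = M1_pow V E 4 + RR E"
    unfolding DC1 using ev_d2G by (simp add: mult_ac)
  also have "(\<Sum>h\<in>E. \<Sum>a\<in>h. ?G a) = (\<Sum>e\<in>E. sd E e * sd E e)"
    unfolding DC1 using ev_dG by (simp add: deg_vs mult_ac)
  finally show ?thesis by simp
qed

lemma pairs_sum:
  assumes fin: "finite A" and sym: "\<And>e f. R e f = R f e"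
  shows "(\<Sum>P\<in>{{e,f} | e f. e \<in> A \<and> f \<in> A \<and> e \<noteq> f \<and> R e f}. \<Prod>x\<in>P. w x) * 2 =
         (\<Sum>e\<in>A. \<Sum>f\<in>A. if e \<noteq> f \<and> R e f then w e * w f else (0::real))"
proof -
  define D where "D = {p\<in>A \<times> A. fst p \<noteq> snd p \<and> R (fst p) (snd p)}"
  define h :: "'b \<times> 'b \<Rightarrow> 'b set" where "h = (\<lambda>p. {fst p, snd p})"
  have finD: "finite D" unfolding D_def using fin by simp
  have img: "{{e,f} | e f. e \<in> A \<and> f \<in> A \<and> e \<noteq> f \<and> R e f} = h ` D"
  proof (intro set_eqI iffI)
    fix P assume "P \<in> {{e,f} | e f. e \<in> A \<and> f \<in> A \<and> e \<noteq> f \<and> R e f}"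
    then obtain e f where "P = {e,f}" "e \<in> A" "f \<in> A" "e \<noteq> f" "R e f" by blast
    thus "P \<in> h ` D" by (intro image_eqI[of _ _ "(e,f)"]) (auto simp: h_def D_def)
  next
    fix P assume "P \<in> h ` D"
    thus "P \<in> {{e,f} | e f. e \<in> A \<and> f \<in> A \<and> e \<noteq> f \<and> R e f}" by (auto simp: h_def D_def) blast
  qed
  have "(\<Sum>e\<in>A. \<Sum>f\<in>A. if e \<noteq> f \<and> R e f then w e * w f else (0::real))
      = (\<Sum>p\<in>A \<times> A. if fst p \<noteq> snd p \<and> R (fst p) (snd p) then w (fst p) * w (snd p) else 0)"
    by (simp add: sum.cartesian_product split_beta)
  also have "\<dots> = (\<Sum>p\<in>D. w (fst p) * w (snd p))"
    unfolding D_def using fin by (simp add: sum.inter_filter)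
  also have "\<dots> = (\<Sum>P\<in>h ` D. \<Sum>p\<in>{p\<in>D. h p = P}. w (fst p) * w (snd p))"
    by (rule sum.image_gen[OF finD])
  also have "\<dots> = (\<Sum>P\<in>h ` D. (\<Prod>x\<in>P. w x) * 2)"
  proof (rule sum.cong[OF refl])
    fix P assume "P \<in> h ` D"
    then obtain e f where ef: "(e,f) \<in> D" "P = {e,f}" unfolding h_def by auto
    have ne: "e \<noteq> f" using ef unfolding D_def by auto
    have fe: "(f,e) \<in> D" using ef sym unfolding D_def by auto
    have "{p\<in>D. h p = P} = {(e,f),(f,e)}"
      using ef fe unfolding h_def by (auto simp: doubleton_eq_iff)
    thus "(\<Sum>p\<in>{p\<in>D. h p = P}. w (fst p) * w (snd p)) = (\<Prod>x\<in>P. w x) * 2"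
      using ne ef by (simp add: mult.commute)
  qed
  finally show ?thesis unfolding img by (simp add: sum_distrib_right)
qed

lemma S3: assumes "e \<in> E" shows "(\<Sum>h\<in>E. mt h e) = sd E e - 1"
proof -
  have "sd E e = (\<Sum>v\<in>e. vs E (\<lambda>_. 1) v)" unfolding sd_def by (simp add: deg_vs)
  also have "\<dots> = (\<Sum>f\<in>E. mt e f + (if e = f then 1 else 0))"
    using VSE[OF assms] card_int[OF assms] by simp
  also have "\<dots> = (\<Sum>h\<in>E. mt h e) + 1"
    using assms by (simp add: sum.distrib finE mt_sym)
  finally show ?thesis by simp
qed


lemma filt: "finite A \<Longrightarrow> (\<Sum>x\<in>{f\<in>A. disjnt e f}. F x) = (\<Sum>x\<in>A. dj e x * F x)"
  by (simp add: sum.inter_filter dj_def, intro sum.cong, auto)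

lemma mrec: assumes "A \<subseteq> E"
  shows "real (Suc k) * real (card (matchings A (Suc k))) = (\<Sum>e\<in>A. real (card (matchings {f\<in>A. disjnt e f} k)))"
proof -
  have "finite A" using finite_subset[OF assms finE] .
  moreover have "\<forall>e\<in>A. e \<noteq> {}" using assms ne_e by blast
  ultimately have "Suc k * card (matchings A (Suc k)) = (\<Sum>e\<in>A. card (matchings {f\<in>A. disjnt e f} k))"
    by (rule match_rec)
  hence "real (Suc k * card (matchings A (Suc k))) = real (\<Sum>e\<in>A. card (matchings {f\<in>A. disjnt e f} k))"
    by (rule arg_cong)
  thus ?thesis by (simp only: of_nat_mult of_nat_sum)
qed

lemma p1: assumes "A \<subseteq> E" shows "real (card (matchings A 1)) = (\<Sum>e\<in>A. 1)"
proof -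
  have fA: "finite A" using finite_subset[OF assms finE] .
  have "\<And>e. finite {f\<in>A. disjnt e f}" using fA by simp
  hence "\<And>e. matchings {f\<in>A. disjnt e f} 0 = {{}}" by (rule match0)
  hence "\<And>e. real (card (matchings {f\<in>A. disjnt e f} 0)) = 1" by simp
  thus ?thesis using mrec[OF assms, of 0] by simp
qed

lemma p2: assumes "A \<subseteq> E" shows "real (card (matchings A 2)) * 2 = (\<Sum>e\<in>A. \<Sum>f\<in>A. dj e f)"
proof -
  have fA: "finite A" using finite_subset[OF assms finE] .
  have "real (card (matchings A 2)) * 2 = (\<Sum>e\<in>A. real (card (matchings {f\<in>A. disjnt e f} 1)))"
    using mrec[OF assms, of 1] by (simp add: mult.commute numeral_2_eq_2)
  also have "\<dots> = (\<Sum>e\<in>A. \<Sum>f\<in>{f\<in>A. disjnt e f}. 1)"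
    by (rule sum.cong[OF refl], rule p1) (use assms in auto)
  also have "\<dots> = (\<Sum>e\<in>A. \<Sum>f\<in>A. dj e f)"
    using filt[OF fA, where F="\<lambda>_. 1"] by simp
  finally show ?thesis .
qed

lemma p3: assumes "A \<subseteq> E" shows "real (card (matchings A 3)) * 6 = (\<Sum>a\<in>A. \<Sum>b\<in>A. \<Sum>c\<in>A. dj a b * dj a c * dj b c)"
proof -
  have fA: "finite A" using finite_subset[OF assms finE] .
  have "real (card (matchings A 3)) * 6 = (\<Sum>e\<in>A. real (card (matchings {f\<in>A. disjnt e f} 2)) * 2)"
  proof -
    have "real (Suc 2) * real (card (matchings A (Suc 2))) = (\<Sum>e\<in>A. real (card (matchings {f\<in>A. disjnt e f} 2)))"
      by (rule mrec[OF assms])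
    moreover have "(\<Sum>e\<in>A. real (card (matchings {f\<in>A. disjnt e f} 2)) * 2) = (\<Sum>e\<in>A. real (card (matchings {f\<in>A. disjnt e f} 2))) * 2"
      by (simp add: sum_distrib_right)
    moreover have "Suc 2 = 3" by simp
    ultimately show ?thesis by simp
  qed
  also have "\<dots> = (\<Sum>e\<in>A. \<Sum>b\<in>{f\<in>A. disjnt e f}. \<Sum>c\<in>{f\<in>A. disjnt e f}. dj b c)"
    by (rule sum.cong[OF refl], rule p2) (use assms in auto)
  also have "\<dots> = (\<Sum>a\<in>A. \<Sum>b\<in>A. \<Sum>c\<in>A. dj a b * dj a c * dj b c)"
    using filt[OF fA] by (simp add: sum_distrib_left mult.assoc)
  finally show ?thesis .
qed

lemma p4: "real (card (matchings E 4)) * 24 =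
   (\<Sum>e1\<in>E. \<Sum>e2\<in>E. \<Sum>e3\<in>E. dj e1 e2 * dj e1 e3 * dj e2 e3 * (\<Sum>e4\<in>E. dj e1 e4 * dj e2 e4 * dj e3 e4))"
proof -
  have "real (card (matchings E 4)) * 24 = (\<Sum>e\<in>E. real (card (matchings {f\<in>E. disjnt e f} 3)) * 6)"
  proof -
    have "real (Suc 3) * real (card (matchings E (Suc 3))) = (\<Sum>e\<in>E. real (card (matchings {f\<in>E. disjnt e f} 3)))"
      by (rule mrec) simp
    moreover have "(\<Sum>e\<in>E. real (card (matchings {f\<in>E. disjnt e f} 3)) * 6) = (\<Sum>e\<in>E. real (card (matchings {f\<in>E. disjnt e f} 3))) * 6"
      by (simp add: sum_distrib_right)
    moreover have "Suc 3 = 4" by simp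
    ultimately show ?thesis by simp
  qed
  also have "\<dots> = (\<Sum>e\<in>E. \<Sum>a\<in>{f\<in>E. disjnt e f}. \<Sum>b\<in>{f\<in>E. disjnt e f}. \<Sum>c\<in>{f\<in>E. disjnt e f}. dj a b * dj a c * dj b c)"
    by (rule sum.cong[OF refl], rule p3) auto
  also have "\<dots> = (\<Sum>e1\<in>E. \<Sum>e2\<in>E. \<Sum>e3\<in>E. dj e1 e2 * dj e1 e3 * dj e2 e3 * (\<Sum>e4\<in>E. dj e1 e4 * dj e2 e4 * dj e3 e4))"
    using filt[OF finE] by (simp add: sum_distrib_left mult_ac)
  finally show ?thesis .
qed

lemma two_in_edge: assumes "e \<in> E" "a \<in> e" "b \<in> e" "a \<noteq> b" shows "e = {a,b}"
proof -
  have "{a,b} \<subseteq> e" using assms by blast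
  moreover have "card {a,b} = card e" using assms card_e by simp
  ultimately show ?thesis using card_subset_eq fin_e assms(1) by metis
qed

lemma edge_between: assumes "h \<in> E" "x \<in> h" "x \<in> e1" "y \<in> h" "y \<in> e2" "disjnt e1 e2"
  shows "h = {x,y}"
  using assms two_in_edge by (metis disjnt_iff)

lemma triple_zero: assumes "h \<in> E" "disjnt e1 e2" "disjnt e1 e3" "disjnt e2 e3"
  shows "mt h e1 * mt h e2 * mt h e3 = 0"
proof (rule ccontr)
  assume "mt h e1 * mt h e2 * mt h e3 \<noteq> 0"
  then obtain a b c where "a \<in> h" "a \<in> e1" "b \<in> h" "b \<in> e2" "c \<in> h" "c \<in> e3"
    by (auto simp: mt_def split: if_splits)
  moreover have "a \<noteq> b" "a \<noteq> c" "b \<noteq> c" using calculation assms(2-4) by (auto simp: disjnt_def)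
  ultimately show False using two_in_edge[OF assms(1), of a b] by auto
qed

lemma vs_lin: "vs E (\<lambda>e. sd E e - 2) v = vs E (sd E) v - 2 * vs E (\<lambda>_. 1) v"
  unfolding vs_def sum_distrib_left sum_subtractf[symmetric] by (rule sum.cong) auto

lemma ev_EM2: "EM2 E * 2 = QQ V E - 4 * (\<Sum>e\<in>E. sd E e * sd E e) + 4 * M1_pow V E 2
   - 2 * (\<Sum>e\<in>E. (sd E e - 2) * (sd E e - 2))"
proof -
  let ?t = "\<lambda>e. sd E e - 2"
  have t: "edge_degree E = ?t" by (rule ext) (simp add: edge_degree_def sd_def)
  have "EM2 E * 2 = (\<Sum>e\<in>E. \<Sum>f\<in>E. if e \<noteq> f \<and> e \<inter> f \<noteq> {} then ?t e * ?t f else 0)"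
    unfolding EM2_def t by (rule pairs_sum[OF finE]) blast
  also have "\<dots> = (\<Sum>e\<in>E. \<Sum>f\<in>E. mt e f * ?t e * ?t f - (if e = f then ?t e * ?t f else 0))"
  proof (intro sum.cong[OF refl])
    fix e f assume "e \<in> E" "f \<in> E"
    hence "e \<noteq> {}" using ne_e by blast
    thus "(if e \<noteq> f \<and> e \<inter> f \<noteq> {} then ?t e * ?t f else 0) = mt e f * ?t e * ?t f - (if e = f then ?t e * ?t f else 0)"
      by (auto simp: mt_def)
  qed
  also have "\<dots> = (\<Sum>e\<in>E. \<Sum>f\<in>E. mt e f * ?t e * ?t f) - (\<Sum>e\<in>E. ?t e * ?t e)"
    by (simp add: sum_subtractf finE)
  also have "\<dots> = (\<Sum>v\<in>V. vs E ?t v * vs E ?t v) - 2 * (\<Sum>e\<in>E. ?t e * ?t e)"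
    by (simp add: L1)
  also have "(\<Sum>v\<in>V. vs E ?t v * vs E ?t v) = QQ V E - 4 * (\<Sum>v\<in>V. vs E (sd E) v * vs E (\<lambda>_. 1) v)
      + 4 * (\<Sum>v\<in>V. real (degree E v) * real (degree E v))"
    unfolding vs_lin QQ_def by (simp add: algebra_simps sum.distrib sum_subtractf sum_distrib_left deg_vs)
  finally show ?thesis by (simp add: ev_dG M1_pow_def power2_eq_square)
qed

lemma c3: assumes e: "e1 \<in> E" "e2 \<in> E" "e3 \<in> E" and d: "disjnt e1 e2" "disjnt e1 e3" "disjnt e2 e3"
  shows "(\<Sum>h\<in>E. dj e1 h * dj e2 h * dj e3 h) =
    real (card E) + 3 - sd E e1 - sd E e2 - sd E e3 + xc E e1 e2 + xc E e1 e3 + xc E e2 e3"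
proof -
  have "(\<Sum>h\<in>E. dj e1 h * dj e2 h * dj e3 h) = (\<Sum>h\<in>E. 1 - mt h e1 - mt h e2 - mt h e3
      + mt h e1 * mt h e2 + mt h e1 * mt h e3 + mt h e2 * mt h e3)"
  proof (rule sum.cong[OF refl])
    fix h assume "h \<in> E"
    hence z: "mt h e1 * mt h e2 * mt h e3 = 0" using triple_zero d by blast
    have "dj e1 h * dj e2 h * dj e3 h = (1 - mt h e1) * (1 - mt h e2) * (1 - mt h e3)"
      by (simp add: dj_mt mt_sym)
    also have "\<dots> = 1 - mt h e1 - mt h e2 - mt h e3
      + mt h e1 * mt h e2 + mt h e1 * mt h e3 + mt h e2 * mt h e3 - mt h e1 * mt h e2 * mt h e3"
      by (simp add: algebra_simps)
    finally show "dj e1 h * dj e2 h * dj e3 h = 1 - mt h e1 - mt h e2 - mt h e3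
      + mt h e1 * mt h e2 + mt h e1 * mt h e3 + mt h e2 * mt h e3" using z by simp
  qed
  also have "\<dots> = real (card E) - (\<Sum>h\<in>E. mt h e1) - (\<Sum>h\<in>E. mt h e2) - (\<Sum>h\<in>E. mt h e3)
      + xc E e1 e2 + xc E e1 e3 + xc E e2 e3"
    by (simp add: sum.distrib sum_subtractf xc_def)
  finally show ?thesis using S3 e by simp
qed

lemma c2: assumes e: "e1 \<in> E" "e2 \<in> E" and d: "disjnt e1 e2"
  shows "(\<Sum>h\<in>E. dj e1 h * dj e2 h) = real (card E) + 2 - sd E e1 - sd E e2 + xc E e1 e2"
proof -
  have "(\<Sum>h\<in>E. dj e1 h * dj e2 h) = (\<Sum>h\<in>E. 1 - mt h e1 - mt h e2 + mt h e1 * mt h e2)"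
    by (rule sum.cong[OF refl]) (simp add: dj_mt mt_sym algebra_simps)
  also have "\<dots> = real (card E) - (\<Sum>h\<in>E. mt h e1) - (\<Sum>h\<in>E. mt h e2) + xc E e1 e2"
    by (simp add: sum.distrib sum_subtractf xc_def)
  finally show ?thesis using S3 e by simp
qed

end

context
  fixes V :: "'a set" and E :: "'a set set"
  assumes sg: "simple_graph V E" and g5: "girth E \<ge> 5"
begin

lemma all3: "(\<forall>i<(3::nat). P i) \<longleftrightarrow> P 0 \<and> P 1 \<and> P 2"
  by (metis One_nat_def Suc_1 lessI less_2_cases less_Suc_eq numeral_3_eq_3)
lemma allSuc: "(\<forall>i<Suc n. P i) \<longleftrightarrow> (\<forall>i<n. P i) \<and> P n"
  by (auto simp: less_Suc_eq)
lemma all4: "(\<forall>i<(4::nat). P i) \<longleftrightarrow> P 0 \<and> P 1 \<and> P 2 \<and> P 3"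
proof -
  have "\<forall>i::nat. i<4 \<longrightarrow> i=0 \<or> i=1 \<or> i=2 \<or> i=3" by arith
  thus ?thesis by auto
qed

lemma girth_le: "is_cycle E cs \<Longrightarrow> girth E \<le> enat (length cs)"
  unfolding girth_def by (rule INF_lower) simp

lemma no_tri: assumes "{a,b} \<in> E" "{b,c} \<in> E" "{c,a} \<in> E" "a \<noteq> b" "b \<noteq> c" "c \<noteq> a"
  shows False
proof -
  have "\<forall>i<3. {[a,b,c]!i, [a,b,c]!((i+1) mod 3)} \<in> E"
    unfolding all3 using assms by (simp add: insert_commute)
  hence "is_cycle E [a,b,c]" using assms unfolding is_cycle_def by simp
  then have "girth E \<le> enat (length [a,b,c])" by (rule girth_le)
  hence "girth E \<le> enat 3" by (simp add: eval_nat_numeral)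
  hence "(5::enat) \<le> enat 3" using g5 by (rule order_trans[rotated])
  thus False by (simp add: numeral_eq_enat)
qed

lemma no_sq: assumes "{a,b} \<in> E" "{b,c} \<in> E" "{c,d} \<in> E" "{d,a} \<in> E" "distinct [a,b,c,d]"
  shows False
proof -
  have "\<forall>i<4. {[a,b,c,d]!i, [a,b,c,d]!((i+1) mod 4)} \<in> E"
    unfolding all4 using assms by (simp add: insert_commute)
  hence "is_cycle E [a,b,c,d]" using assms unfolding is_cycle_def by simp
  then have "girth E \<le> enat (length [a,b,c,d])" by (rule girth_le)
  hence "girth E \<le> enat 4" by (simp add: eval_nat_numeral)
  hence "(5::enat) \<le> enat 4" using g5 by (rule order_trans[rotated])
  thus False by (simp add: numeral_eq_enat)
qed


lemmas two_in_edge' = two_in_edge[OF sg]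
lemmas edge_between' = edge_between[OF sg]
lemmas edge' = edge[OF sg]
lemmas finE' = finE[OF sg]

lemma other: assumes "e \<in> E" "u \<in> e" shows "\<exists>p. e = {u,p} \<and> p \<noteq> u"
  using edge'[OF assms(1)] assms(2) by (auto simp: insert_commute)

lemma x_le1: assumes "e1 \<in> E" "e2 \<in> E" "disjnt e1 e2"
  shows "card {h\<in>E. h \<inter> e1 \<noteq> {} \<and> h \<inter> e2 \<noteq> {}} \<le> 1"
proof -
  have "\<forall>h\<in>{h\<in>E. h \<inter> e1 \<noteq> {} \<and> h \<inter> e2 \<noteq> {}}. \<forall>h'\<in>{h\<in>E. h \<inter> e1 \<noteq> {} \<and> h \<inter> e2 \<noteq> {}}. h = h'"
  proof (intro ballI)
    fix h h' assume h: "h \<in> {h\<in>E. h \<inter> e1 \<noteq> {} \<and> h \<inter> e2 \<noteq> {}}"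
      and h': "h' \<in> {h\<in>E. h \<inter> e1 \<noteq> {} \<and> h \<inter> e2 \<noteq> {}}"
    obtain x y where xy: "x \<in> h" "x \<in> e1" "y \<in> h" "y \<in> e2" using h by blast
    obtain x' y' where xy': "x' \<in> h'" "x' \<in> e1" "y' \<in> h'" "y' \<in> e2" using h' by blast
    have hE: "h \<in> E" "h' \<in> E" using h h' by auto
    have H: "h = {x,y}" using edge_between'[OF hE(1) xy assms(3)] .
    have H': "h' = {x',y'}" using edge_between'[OF hE(2) xy' assms(3)] .
    have d: "x \<noteq> y" "x \<noteq> y'" "x' \<noteq> y" "x' \<noteq> y'"
      using xy xy' assms(3) by (auto simp: disjnt_def)
    show "h = h'"
    proof (cases "x = x'")
      case True
      show ?thesis
      proof (rule ccontr)
        assume "h \<noteq> h'"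
        hence "y \<noteq> y'" using H H' True by auto
        hence "e2 = {y,y'}" using two_in_edge'[OF assms(2)] xy xy' by blast
        moreover have "{y',x} \<in> E" using H' True hE(2) by (simp add: insert_commute)
        moreover have "{x,y} \<in> E" using H hE(1) by simp
        ultimately show False using no_tri[of x y y'] assms(2) d \<open>y \<noteq> y'\<close> by metis
      qed
    next
      case False
      hence e1: "e1 = {x,x'}" using two_in_edge'[OF assms(1)] xy xy' by blast
      show ?thesis
      proof (cases "y = y'")
        case True
        have "{x,y} \<in> E" using H hE(1) by simp
        moreover have "{y,x'} \<in> E" using H' True hE(2) by (simp add: insert_commute)
        moreover have "{x',x} \<in> E" using e1 assms(1) by (simp add: insert_commute)
        ultimately show ?thesis using no_tri[of x y x'] False d by metis
      next
        case yne: False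
        hence e2: "e2 = {y,y'}" using two_in_edge'[OF assms(2)] xy xy' by blast
        have "{x,y} \<in> E" using H hE(1) by simp
        moreover have "{y,y'} \<in> E" using e2 assms(2) by simp
        moreover have "{y',x'} \<in> E" using H' hE(2) by (simp add: insert_commute)
        moreover have "{x',x} \<in> E" using e1 assms(1) by (simp add: insert_commute)
        moreover have "distinct [x,y,y',x']" using False yne d by auto
        ultimately show ?thesis using no_sq[of x y y' x'] by metis
      qed
    qed
  qed
  moreover have fin: "finite {h\<in>E. h \<inter> e1 \<noteq> {} \<and> h \<inter> e2 \<noteq> {}}" using finE' by simp
  ultimately have "card {h\<in>E. h \<inter> e1 \<noteq> {} \<and> h \<inter> e2 \<noteq> {}} \<le> Suc 0"
    using card_le_Suc0_iff_eq[OF fin] by blast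
  thus ?thesis by simp
qed

lemma xc_card: "xc E a b = real (card {h\<in>E. h \<inter> a \<noteq> {} \<and> h \<inter> b \<noteq> {}})"
proof -
  have "xc E a b = (\<Sum>h\<in>E. if h \<inter> a \<noteq> {} \<and> h \<inter> b \<noteq> {} then 1 else 0)"
    unfolding xc_def by (rule sum.cong) (auto simp: mt_def)
  also have "\<dots> = real (card {h\<in>E. h \<inter> a \<noteq> {} \<and> h \<inter> b \<noteq> {}})"
    using sum.inter_filter[OF finE', of "\<lambda>_. 1::real" "\<lambda>h. h \<inter> a \<noteq> {} \<and> h \<inter> b \<noteq> {}"] by simp
  finally show ?thesis .
qed

lemma xc_sq: assumes "e1 \<in> E" "e2 \<in> E" "disjnt e1 e2"
  shows "xc E e1 e2 * xc E e1 e2 = xc E e1 e2"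
proof -
  have "card {h\<in>E. h \<inter> e1 \<noteq> {} \<and> h \<inter> e2 \<noteq> {}} = 0 \<or> card {h\<in>E. h \<inter> e1 \<noteq> {} \<and> h \<inter> e2 \<noteq> {}} = 1"
    using x_le1[OF assms] by linarith
  thus ?thesis unfolding xc_card by auto
qed


lemma LXpt: assumes hE: "h \<in> E" and h: "h = {u,v}" "u \<noteq> v" and e: "e1 \<in> E" "e2 \<in> E"
  shows "dj e1 e2 * (mt h e1 * mt h e2) =
     (if u \<in> e1 \<and> e1 \<noteq> h \<and> v \<in> e2 \<and> e2 \<noteq> h then 1 else 0) +
     (if v \<in> e1 \<and> e1 \<noteq> h \<and> u \<in> e2 \<and> e2 \<noteq> h then 1 else 0)"
proof -
  let ?L = "disjnt e1 e2 \<and> h \<inter> e1 \<noteq> {} \<and> h \<inter> e2 \<noteq> {}"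
  let ?R1 = "u \<in> e1 \<and> e1 \<noteq> h \<and> v \<in> e2 \<and> e2 \<noteq> h"
  let ?R2 = "v \<in> e1 \<and> e1 \<noteq> h \<and> u \<in> e2 \<and> e2 \<noteq> h"
  have lhs: "dj e1 e2 * (mt h e1 * mt h e2) = (if ?L then 1 else 0)"
    by (simp add: dj_def mt_def)
  have n12: "\<not> (?R1 \<and> ?R2)"
  proof
    assume "?R1 \<and> ?R2"
    hence "e1 = {u,v}" using two_in_edge'[OF e(1)] h(2) by blast
    thus False using h \<open>?R1 \<and> ?R2\<close> by blast
  qed
  have R1L: "?R1 \<Longrightarrow> ?L"
  proof -
    assume R: ?R1
    obtain p where p: "e1 = {u,p}" "p \<noteq> u" using other[OF e(1)] R by blast
    obtain q where q: "e2 = {v,q}" "q \<noteq> v" using other[OF e(2)] R by blast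
    have pv: "p \<noteq> v" using R p h by auto
    have qu: "q \<noteq> u" using R q h by (auto simp: insert_commute)
    have pq: "p \<noteq> q"
    proof
      assume "p = q"
      hence "{u,v} \<in> E" "{v,p} \<in> E" "{p,u} \<in> E" using hE h e p q by (auto simp: insert_commute)
      thus False using no_tri[of u v p] h(2) pv p(2) by metis
    qed
    have "disjnt e1 e2" using p q pv qu pq h(2) by (auto simp: disjnt_def)
    thus ?L using R h by auto
  qed
  have R2L: "?R2 \<Longrightarrow> ?L"
  proof -
    assume R: ?R2
    obtain p where p: "e1 = {v,p}" "p \<noteq> v" using other[OF e(1)] R by blast
    obtain q where q: "e2 = {u,q}" "q \<noteq> u" using other[OF e(2)] R by blast
    have pv: "p \<noteq> u" using R p h by (auto simp: insert_commute)
    have qu: "q \<noteq> v" using R q h by auto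
    have pq: "p \<noteq> q"
    proof
      assume "p = q"
      hence "{v,u} \<in> E" "{u,p} \<in> E" "{p,v} \<in> E" using hE h e p q by (auto simp: insert_commute)
      thus False using no_tri[of v u p] h(2) pv p(2) by metis
    qed
    have "disjnt e1 e2" using p q pv qu pq h(2) by (auto simp: disjnt_def)
    thus ?L using R h by auto
  qed
  have LR: "?L \<Longrightarrow> ?R1 \<or> ?R2"
  proof -
    assume L: ?L
    have n1: "e1 \<noteq> h" using L by (auto simp: disjnt_def)
    have n2: "e2 \<noteq> h" using L by (auto simp: disjnt_def)
    have "u \<in> e1 \<or> v \<in> e1" using L h by auto
    moreover have "u \<in> e2 \<or> v \<in> e2" using L h by auto
    ultimately show ?thesis using L n1 n2 by (auto simp: disjnt_def)
  qed
  show ?thesis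
  proof (cases ?L)
    case True
    thus ?thesis using lhs LR n12 by auto
  next
    case False
    thus ?thesis using lhs R1L R2L by auto
  qed
qed

lemma vs_minus: assumes "h \<in> E" "u \<in> h"
  shows "(\<Sum>e\<in>E. if u \<in> e \<and> e \<noteq> h then g e else 0) = vs E g u - g h"
proof -
  have "vs E g u = (if u \<in> h then g h else 0) + (\<Sum>e\<in>E - {h}. if u \<in> e then g e else 0)"
    unfolding vs_def using sum.remove[OF finE' assms(1)] by blast
  moreover have "(\<Sum>e\<in>E. if u \<in> e \<and> e \<noteq> h then g e else 0) =
      (if u \<in> h \<and> h \<noteq> h then g h else 0) + (\<Sum>e\<in>E - {h}. if u \<in> e \<and> e \<noteq> h then g e else 0)"
    using sum.remove[OF finE' assms(1)] by blast
  moreover have "(\<Sum>e\<in>E - {h}. if u \<in> e \<and> e \<noteq> h then g e else 0) = (\<Sum>e\<in>E - {h}. if u \<in> e then g e else 0)"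
    by (rule sum.cong) auto
  ultimately show ?thesis using assms(2) by simp
qed

lemma LX: "(\<Sum>e1\<in>E. \<Sum>e2\<in>E. dj e1 e2 * xc E e1 e2 * g e1 * k e2) =
   (\<Sum>h\<in>E. \<Sum>a\<in>h. \<Sum>b\<in>h - {a}. (vs E g a - g h) * (vs E k b - k h))"
proof -
  have "(\<Sum>e1\<in>E. \<Sum>e2\<in>E. dj e1 e2 * xc E e1 e2 * g e1 * k e2) =
     (\<Sum>e1\<in>E. \<Sum>e2\<in>E. \<Sum>h\<in>E. dj e1 e2 * (mt h e1 * mt h e2) * g e1 * k e2)"
    unfolding xc_def by (simp add: sum_distrib_left sum_distrib_right)
  also have "\<dots> = (\<Sum>e1\<in>E. \<Sum>h\<in>E. \<Sum>e2\<in>E. dj e1 e2 * (mt h e1 * mt h e2) * g e1 * k e2)"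
    by (rule sum.cong[OF refl], rule sum.swap)
  also have "\<dots> = (\<Sum>h\<in>E. \<Sum>e1\<in>E. \<Sum>e2\<in>E. dj e1 e2 * (mt h e1 * mt h e2) * g e1 * k e2)"
    by (rule sum.swap)
  also have "\<dots> = (\<Sum>h\<in>E. \<Sum>a\<in>h. \<Sum>b\<in>h - {a}. (vs E g a - g h) * (vs E k b - k h))"
  proof (rule sum.cong[OF refl])
    fix h assume hE: "h \<in> E"
    obtain u v where h: "h = {u,v}" "u \<noteq> v" using edge'[OF hE] by blast
    let ?A1 = "\<lambda>e. if u \<in> e \<and> e \<noteq> h then g e else 0"
    let ?A2 = "\<lambda>e. if v \<in> e \<and> e \<noteq> h then g e else 0"
    let ?B1 = "\<lambda>e. if v \<in> e \<and> e \<noteq> h then k e else 0"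
    let ?B2 = "\<lambda>e. if u \<in> e \<and> e \<noteq> h then k e else 0"
    have "(\<Sum>e1\<in>E. \<Sum>e2\<in>E. dj e1 e2 * (mt h e1 * mt h e2) * g e1 * k e2) =
          (\<Sum>e1\<in>E. \<Sum>e2\<in>E. ?A1 e1 * ?B1 e2 + ?A2 e1 * ?B2 e2)"
    proof (intro sum.cong[OF refl])
      fix e1 e2 assume "e1 \<in> E" "e2 \<in> E"
      hence pt: "dj e1 e2 * (mt h e1 * mt h e2) =
     (if u \<in> e1 \<and> e1 \<noteq> h \<and> v \<in> e2 \<and> e2 \<noteq> h then 1 else 0) +
     (if v \<in> e1 \<and> e1 \<noteq> h \<and> u \<in> e2 \<and> e2 \<noteq> h then 1 else 0)"
        using LXpt[OF hE h] by simp
      have a: "?A1 e1 * ?B1 e2 = (if u \<in> e1 \<and> e1 \<noteq> h \<and> v \<in> e2 \<and> e2 \<noteq> h then 1 else 0) * g e1 * k e2"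
        by simp
      have b: "?A2 e1 * ?B2 e2 = (if v \<in> e1 \<and> e1 \<noteq> h \<and> u \<in> e2 \<and> e2 \<noteq> h then 1 else 0) * g e1 * k e2"
        by simp
      show "dj e1 e2 * (mt h e1 * mt h e2) * g e1 * k e2 = ?A1 e1 * ?B1 e2 + ?A2 e1 * ?B2 e2"
        unfolding a b pt by (simp add: algebra_simps)
    qed
    also have "\<dots> = (\<Sum>e1\<in>E. ?A1 e1) * (\<Sum>e2\<in>E. ?B1 e2) + (\<Sum>e1\<in>E. ?A2 e1) * (\<Sum>e2\<in>E. ?B2 e2)"
      by (simp add: sum.distrib sum_product)
    also have "\<dots> = (vs E g u - g h) * (vs E k v - k h) + (vs E g v - g h) * (vs E k u - k h)"
      using vs_minus[OF hE] h by simp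
    also have "\<dots> = (\<Sum>a\<in>h. \<Sum>b\<in>h - {a}. (vs E g a - g h) * (vs E k b - k h))"
      using h by (simp add: insert_Diff_if)
    finally show "(\<Sum>e1\<in>E. \<Sum>e2\<in>E. dj e1 e2 * (mt h e1 * mt h e2) * g e1 * k e2) =
          (\<Sum>a\<in>h. \<Sum>b\<in>h - {a}. (vs E g a - g h) * (vs E k b - k h))" .
  qed
  finally show ?thesis .
qed


lemmas c3' = c3[OF sg]
lemmas c2' = c2[OF sg]
lemmas p4' = p4[OF sg]

lemma dj_nz: "dj a b \<noteq> 0 \<Longrightarrow> disjnt a b" by (simp add: dj_def split: if_splits)

lemma T3_eq: "real (card (matchings E 4)) * 24 =
   (\<Sum>a\<in>E. \<Sum>b\<in>E. \<Sum>c\<in>E. dj a b * dj a c * dj b c *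
      (real (card E) + 3 - sd E a - sd E b - sd E c + xc E a b + xc E a c + xc E b c))"
  unfolding p4'
proof (intro sum.cong[OF refl])
  fix a b c assume e: "a \<in> E" "b \<in> E" "c \<in> E"
  show "dj a b * dj a c * dj b c * (\<Sum>e4\<in>E. dj a e4 * dj b e4 * dj c e4) =
        dj a b * dj a c * dj b c *
      (real (card E) + 3 - sd E a - sd E b - sd E c + xc E a b + xc E a c + xc E b c)"
  proof (cases "dj a b * dj a c * dj b c = 0")
    case False
    hence "disjnt a b" "disjnt a c" "disjnt b c" using dj_nz by auto
    thus ?thesis using c3'[OF e] by simp
  qed simp
qed

lemma sw12: "(\<Sum>a\<in>A. \<Sum>b\<in>A. \<Sum>c\<in>A. F a b c) = (\<Sum>a\<in>A. \<Sum>b\<in>A. \<Sum>c\<in>A. F b a c)"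
  by (rule sum.swap)

lemma sw23: "(\<Sum>a\<in>A. \<Sum>b\<in>A. \<Sum>c\<in>A. F a b c) = (\<Sum>a\<in>A. \<Sum>b\<in>A. \<Sum>c\<in>A. F a c b)"
  by (rule sum.cong[OF refl], rule sum.swap)

lemma xc_sym: "xc E a b = xc E b a" by (simp add: xc_def mult.commute)

lemma T3_sym:
  defines "T \<equiv> \<lambda>a b c. dj a b * dj a c * dj b c"
  shows "(\<Sum>a\<in>E. \<Sum>b\<in>E. \<Sum>c\<in>E. T a b c * sd E b) = (\<Sum>a\<in>E. \<Sum>b\<in>E. \<Sum>c\<in>E. T a b c * sd E a)"
    and "(\<Sum>a\<in>E. \<Sum>b\<in>E. \<Sum>c\<in>E. T a b c * sd E c) = (\<Sum>a\<in>E. \<Sum>b\<in>E. \<Sum>c\<in>E. T a b c * sd E b)"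
    and "(\<Sum>a\<in>E. \<Sum>b\<in>E. \<Sum>c\<in>E. T a b c * xc E a c) = (\<Sum>a\<in>E. \<Sum>b\<in>E. \<Sum>c\<in>E. T a b c * xc E a b)"
    and "(\<Sum>a\<in>E. \<Sum>b\<in>E. \<Sum>c\<in>E. T a b c * xc E b c) = (\<Sum>a\<in>E. \<Sum>b\<in>E. \<Sum>c\<in>E. T a b c * xc E a c)"
proof -
  have s12: "\<And>a b c. T b a c = T a b c" and s23: "\<And>a b c. T a c b = T a b c"
    unfolding T_def by (simp_all add: dj_sym mult_ac)
  show "(\<Sum>a\<in>E. \<Sum>b\<in>E. \<Sum>c\<in>E. T a b c * sd E b) = (\<Sum>a\<in>E. \<Sum>b\<in>E. \<Sum>c\<in>E. T a b c * sd E a)"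
    using sw12[of "\<lambda>a b c. T a b c * sd E a" E] s12 by simp
  show "(\<Sum>a\<in>E. \<Sum>b\<in>E. \<Sum>c\<in>E. T a b c * sd E c) = (\<Sum>a\<in>E. \<Sum>b\<in>E. \<Sum>c\<in>E. T a b c * sd E b)"
    using sw23[of "\<lambda>a b c. T a b c * sd E b" E] s23 by simp
  show "(\<Sum>a\<in>E. \<Sum>b\<in>E. \<Sum>c\<in>E. T a b c * xc E a c) = (\<Sum>a\<in>E. \<Sum>b\<in>E. \<Sum>c\<in>E. T a b c * xc E a b)"
    using sw23[of "\<lambda>a b c. T a b c * xc E a b" E] s23 by simp
  show "(\<Sum>a\<in>E. \<Sum>b\<in>E. \<Sum>c\<in>E. T a b c * xc E b c) = (\<Sum>a\<in>E. \<Sum>b\<in>E. \<Sum>c\<in>E. T a b c * xc E a c)"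
    using sw12[of "\<lambda>a b c. T a b c * xc E a c" E] s12 by simp
qed

lemma T2_eq: "real (card (matchings E 4)) * 24 =
   (\<Sum>a\<in>E. \<Sum>b\<in>E. dj a b * (real (card E) + 3 - 3 * sd E a + 3 * xc E a b) *
        (real (card E) + 2 - sd E a - sd E b + xc E a b))"
proof -
  define T :: "'a set \<Rightarrow> 'a set \<Rightarrow> 'a set \<Rightarrow> real" where "T \<equiv> \<lambda>a b c. dj a b * dj a c * dj b c"
  define m where "m = real (card E)"
  have "real (card (matchings E 4)) * 24 =
   (\<Sum>a\<in>E. \<Sum>b\<in>E. \<Sum>c\<in>E. T a b c * (m + 3) - T a b c * sd E a - T a b c * sd E b - T a b c * sd E c
       + T a b c * xc E a b + T a b c * xc E a c + T a b c * xc E b c)"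
    unfolding T3_eq T_def m_def by (simp add: algebra_simps)
  also have "\<dots> = (\<Sum>a\<in>E. \<Sum>b\<in>E. \<Sum>c\<in>E. T a b c * (m + 3)) - (\<Sum>a\<in>E. \<Sum>b\<in>E. \<Sum>c\<in>E. T a b c * sd E a)
      - (\<Sum>a\<in>E. \<Sum>b\<in>E. \<Sum>c\<in>E. T a b c * sd E b) - (\<Sum>a\<in>E. \<Sum>b\<in>E. \<Sum>c\<in>E. T a b c * sd E c)
      + (\<Sum>a\<in>E. \<Sum>b\<in>E. \<Sum>c\<in>E. T a b c * xc E a b) + (\<Sum>a\<in>E. \<Sum>b\<in>E. \<Sum>c\<in>E. T a b c * xc E a c)
      + (\<Sum>a\<in>E. \<Sum>b\<in>E. \<Sum>c\<in>E. T a b c * xc E b c)"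
    by (simp only: sum.distrib sum_subtractf)
  also have "\<dots> = (\<Sum>a\<in>E. \<Sum>b\<in>E. \<Sum>c\<in>E. T a b c * (m + 3)) - 3 * (\<Sum>a\<in>E. \<Sum>b\<in>E. \<Sum>c\<in>E. T a b c * sd E a)
      + 3 * (\<Sum>a\<in>E. \<Sum>b\<in>E. \<Sum>c\<in>E. T a b c * xc E a b)"
    using T3_sym unfolding T_def by linarith
  also have "\<dots> = (\<Sum>a\<in>E. \<Sum>b\<in>E. \<Sum>c\<in>E. T a b c * (m + 3 - 3 * sd E a + 3 * xc E a b))"
    by (simp add: sum.distrib sum_subtractf sum_distrib_left algebra_simps)
  also have "\<dots> = (\<Sum>a\<in>E. \<Sum>b\<in>E. dj a b * (m + 3 - 3 * sd E a + 3 * xc E a b) *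
        (\<Sum>c\<in>E. dj a c * dj b c))"
    unfolding T_def by (intro sum.cong refl) (simp add: sum_distrib_left sum_distrib_right mult_ac)
  also have "\<dots> = (\<Sum>a\<in>E. \<Sum>b\<in>E. dj a b * (m + 3 - 3 * sd E a + 3 * xc E a b) *
        (m + 2 - sd E a - sd E b + xc E a b))"
  proof (intro sum.cong[OF refl])
    fix a b assume e: "a \<in> E" "b \<in> E"
    show "dj a b * (m + 3 - 3 * sd E a + 3 * xc E a b) * (\<Sum>c\<in>E. dj a c * dj b c) =
          dj a b * (m + 3 - 3 * sd E a + 3 * xc E a b) * (m + 2 - sd E a - sd E b + xc E a b)"
    proof (cases "dj a b = 0")
      case False
      thus ?thesis using c2'[OF e dj_nz[OF False]] m_def by simp
    qed simp
  qed
  finally show ?thesis unfolding m_def .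
qed


lemma final_alg:
  fixes p m D2 D3 D4 M2 R Q EM S1 S2 S3 A0 A1 A2 A11 X0 X1 T :: real
  assumes "p * 24 = (m+3)*(m+2)*A0 - (5*m+12)*A1 + (4*m+12)*X0 + 3*A2 + 3*A11 - 9*X1"
    and "A0 = m*m - (D2 - m)" and "A1 = S1*m - (S2 - S1)" and "A2 = S2*m - (S3 - S2)"
    and "A11 = S1*S1 - (Q - S2)" and "X0 = 2*M2 - 2*S1 + 2*m"
    and "X1 = Q - (D4 + R) - 2*S2 + 2*S1"
    and "S1 = D2" and "S2 = D3 + 2*M2" and "S3 = D4 + 3*R"
    and "EM * 2 = Q - 4*S2 + 4*D2 - 2*T" and "T = S2 - 4*S1 + 4*m"
  shows "p = m ^ 4 / 24 + m ^ 3 / 4 + 19 / 24 * m ^ 2 - 11 / 4 * m + D2 ^ 2 / 8 + m * D3 / 3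
        - m ^ 2 * D2 / 4 + m * M2 + D4 / 4 - 2 * M2 - 5 / 4 * m * D2 + 7 / 2 * D2
        - EM - 3 / 2 * D3"
proof -
  have "EM = (Q - 4*S2 + 4*D2 - 2*T) / 2" using assms(11) by simp
  hence "p * 24 = (m ^ 4 / 24 + m ^ 3 / 4 + 19 / 24 * m ^ 2 - 11 / 4 * m + D2 ^ 2 / 8 + m * D3 / 3
        - m ^ 2 * D2 / 4 + m * M2 + D4 / 4 - 2 * M2 - 5 / 4 * m * D2 + 7 / 2 * D2
        - EM - 3 / 2 * D3) * 24"
    using assms by (simp add: algebra_simps power2_eq_square power3_eq_cube power4_eq_xxxx)
  thus ?thesis by (metis mult_right_cancel zero_neq_numeral)
qed


lemma T2_lin:
  defines "m \<equiv> real (card E)"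
  shows "real (card (matchings E 4)) * 24 =
    (m+3)*(m+2)*(\<Sum>a\<in>E. \<Sum>b\<in>E. dj a b) - (5*m+12)*(\<Sum>a\<in>E. \<Sum>b\<in>E. dj a b * sd E a)
    + (4*m+12)*(\<Sum>a\<in>E. \<Sum>b\<in>E. dj a b * xc E a b) + 3*(\<Sum>a\<in>E. \<Sum>b\<in>E. dj a b * (sd E a * sd E a))
    + 3*(\<Sum>a\<in>E. \<Sum>b\<in>E. dj a b * (sd E a * sd E b)) - 9*(\<Sum>a\<in>E. \<Sum>b\<in>E. dj a b * xc E a b * sd E a)"
proof -
  have pw: "\<And>a b. a \<in> E \<Longrightarrow> b \<in> E \<Longrightarrow> dj a b * (m + 3 - 3 * sd E a + 3 * xc E a b) * (m + 2 - sd E a - sd E b + xc E a b)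
     = (m+3)*(m+2)*dj a b - (m+3)*(dj a b * sd E a) - (m+3)*(dj a b * sd E b) + (4*m+12)*(dj a b * xc E a b)
       - (3*m+6)*(dj a b * sd E a) + 3*(dj a b * (sd E a * sd E a)) + 3*(dj a b * (sd E a * sd E b))
       - 6*(dj a b * xc E a b * sd E a) - 3*(dj a b * xc E a b * sd E b)"
  proof -
    fix a b assume e: "a \<in> E" "b \<in> E"
    have hx: "dj a b * (xc E a b * xc E a b) = dj a b * xc E a b"
    proof (cases "dj a b = 0")
      case False thus ?thesis using xc_sq[OF e dj_nz[OF False]] by simp
    qed simp
    have "dj a b * (m + 3 - 3 * sd E a + 3 * xc E a b) * (m + 2 - sd E a - sd E b + xc E a b)
     - ((m+3)*(m+2)*dj a b - (m+3)*(dj a b * sd E a) - (m+3)*(dj a b * sd E b) + (4*m+12)*(dj a b * xc E a b)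
       - (3*m+6)*(dj a b * sd E a) + 3*(dj a b * (sd E a * sd E a)) + 3*(dj a b * (sd E a * sd E b))
       - 6*(dj a b * xc E a b * sd E a) - 3*(dj a b * xc E a b * sd E b))
     = 3 * (dj a b * (xc E a b * xc E a b) - dj a b * xc E a b)"
      by (simp add: algebra_simps)
    thus "dj a b * (m + 3 - 3 * sd E a + 3 * xc E a b) * (m + 2 - sd E a - sd E b + xc E a b)
     = (m+3)*(m+2)*dj a b - (m+3)*(dj a b * sd E a) - (m+3)*(dj a b * sd E b) + (4*m+12)*(dj a b * xc E a b)
       - (3*m+6)*(dj a b * sd E a) + 3*(dj a b * (sd E a * sd E a)) + 3*(dj a b * (sd E a * sd E b))
       - 6*(dj a b * xc E a b * sd E a) - 3*(dj a b * xc E a b * sd E b)" using hx by simp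
  qed
  have swA: "(\<Sum>a\<in>E. \<Sum>b\<in>E. dj a b * sd E b) = (\<Sum>a\<in>E. \<Sum>b\<in>E. dj a b * sd E a)"
    by (subst sum.swap) (simp add: dj_sym)
  have swX: "(\<Sum>a\<in>E. \<Sum>b\<in>E. dj a b * xc E a b * sd E b) = (\<Sum>a\<in>E. \<Sum>b\<in>E. dj a b * xc E a b * sd E a)"
    by (subst sum.swap) (simp add: dj_sym xc_sym)
  have "real (card (matchings E 4)) * 24 =
    (\<Sum>a\<in>E. \<Sum>b\<in>E. (m+3)*(m+2)*dj a b - (m+3)*(dj a b * sd E a) - (m+3)*(dj a b * sd E b) + (4*m+12)*(dj a b * xc E a b)
       - (3*m+6)*(dj a b * sd E a) + 3*(dj a b * (sd E a * sd E a)) + 3*(dj a b * (sd E a * sd E b))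
       - 6*(dj a b * xc E a b * sd E a) - 3*(dj a b * xc E a b * sd E b))"
    unfolding T2_eq m_def[symmetric] using pw by (simp cong: sum.cong)
  also have "\<dots> = (m+3)*(m+2)*(\<Sum>a\<in>E. \<Sum>b\<in>E. dj a b) - (m+3)*(\<Sum>a\<in>E. \<Sum>b\<in>E. dj a b * sd E a)
     - (m+3)*(\<Sum>a\<in>E. \<Sum>b\<in>E. dj a b * sd E b) + (4*m+12)*(\<Sum>a\<in>E. \<Sum>b\<in>E. dj a b * xc E a b)
     - (3*m+6)*(\<Sum>a\<in>E. \<Sum>b\<in>E. dj a b * sd E a) + 3*(\<Sum>a\<in>E. \<Sum>b\<in>E. dj a b * (sd E a * sd E a))
     + 3*(\<Sum>a\<in>E. \<Sum>b\<in>E. dj a b * (sd E a * sd E b))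
     - 6*(\<Sum>a\<in>E. \<Sum>b\<in>E. dj a b * xc E a b * sd E a) - 3*(\<Sum>a\<in>E. \<Sum>b\<in>E. dj a b * xc E a b * sd E b)"
    by (simp only: sum.distrib sum_subtractf sum_distrib_left)
  finally show ?thesis unfolding swA swX by (simp add: algebra_simps)
qed


lemma Ld: "(\<Sum>a\<in>E. \<Sum>b\<in>E. dj a b * g a * k b) =
   (\<Sum>a\<in>E. g a) * (\<Sum>b\<in>E. k b) - ((\<Sum>v\<in>V. vs E g v * vs E k v) - (\<Sum>e\<in>E. g e * k e))"
proof -
  have "(\<Sum>a\<in>E. \<Sum>b\<in>E. dj a b * g a * k b) = (\<Sum>a\<in>E. \<Sum>b\<in>E. g a * k b - mt a b * g a * k b)"
    by (simp add: dj_mt algebra_simps)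
  also have "\<dots> = (\<Sum>a\<in>E. g a) * (\<Sum>b\<in>E. k b) - (\<Sum>a\<in>E. \<Sum>b\<in>E. mt a b * g a * k b)"
    by (simp add: sum_subtractf sum_product)
  finally show ?thesis using L1[OF sg, of g k] by simp
qed

lemma main: "real (card (matchings E 4)) =
     (let m = real (card E); M1 = M1_pow V E 2; F = M1_pow V E 3; M14 = M1_pow V E 4 in
        m ^ 4 / 24 + m ^ 3 / 4 + 19 / 24 * m ^ 2 - 11 / 4 * m + M1 ^ 2 / 8 + m * F / 3
        - m ^ 2 * M1 / 4 + m * M2 E + M14 / 4 - 2 * M2 E - 5 / 4 * m * M1 + 7 / 2 * M1
        - EM2 E - 3 / 2 * F)"
proof -
  define m where "m = real (card E)"
  have one: "(\<Sum>e\<in>E. (1::real)) = m" by (simp add: m_def)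
  have dd: "(\<Sum>v\<in>V. vs E (\<lambda>_. 1) v * vs E (\<lambda>_. 1) v) = M1_pow V E 2"
    by (simp add: M1_pow_def power2_eq_square deg_vs[OF sg])
  have A0: "(\<Sum>a\<in>E. \<Sum>b\<in>E. dj a b) = m*m - (M1_pow V E 2 - m)"
    using Ld[of "\<lambda>_. 1" "\<lambda>_. 1"] one dd by simp
  have A1: "(\<Sum>a\<in>E. \<Sum>b\<in>E. dj a b * sd E a) = (\<Sum>e\<in>E. sd E e) * m - ((\<Sum>e\<in>E. sd E e * sd E e) - (\<Sum>e\<in>E. sd E e))"
    using Ld[of "sd E" "\<lambda>_. 1"] one ev_dG[OF sg] by simp
  have A2: "(\<Sum>a\<in>E. \<Sum>b\<in>E. dj a b * (sd E a * sd E a)) = (\<Sum>e\<in>E. sd E e * sd E e) * m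
      - ((\<Sum>e\<in>E. sd E e * sd E e * sd E e) - (\<Sum>e\<in>E. sd E e * sd E e))"
    using Ld[of "\<lambda>e. sd E e * sd E e" "\<lambda>_. 1"] one ev_dG2[OF sg] by simp
  have A11: "(\<Sum>a\<in>E. \<Sum>b\<in>E. dj a b * (sd E a * sd E b)) = (\<Sum>e\<in>E. sd E e) * (\<Sum>e\<in>E. sd E e)
      - (QQ V E - (\<Sum>e\<in>E. sd E e * sd E e))"
    unfolding QQ_def using Ld[of "sd E" "sd E"] by (simp add: mult.assoc)
  have X0: "(\<Sum>a\<in>E. \<Sum>b\<in>E. dj a b * xc E a b) = 2 * M2 E - 2 * (\<Sum>e\<in>E. sd E e) + 2 * m"
    using LX[of "\<lambda>_. 1" "\<lambda>_. 1"] ev_X0[OF sg] m_def by simp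
  have X1: "(\<Sum>a\<in>E. \<Sum>b\<in>E. dj a b * xc E a b * sd E a) =
      QQ V E - (M1_pow V E 4 + RR E) - 2 * (\<Sum>e\<in>E. sd E e * sd E e) + 2 * (\<Sum>e\<in>E. sd E e)"
    using LX[of "sd E" "\<lambda>_. 1"] ev_X1[OF sg] by simp
  have T: "(\<Sum>e\<in>E. (sd E e - 2) * (sd E e - 2)) = (\<Sum>e\<in>E. sd E e * sd E e) - 4 * (\<Sum>e\<in>E. sd E e) + 4 * m"
    by (simp add: algebra_simps sum.distrib sum_subtractf sum_distrib_left sum_distrib_right m_def)
  have "real (card (matchings E 4)) =
     m ^ 4 / 24 + m ^ 3 / 4 + 19 / 24 * m ^ 2 - 11 / 4 * m + M1_pow V E 2 ^ 2 / 8 + m * M1_pow V E 3 / 3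
        - m ^ 2 * M1_pow V E 2 / 4 + m * M2 E + M1_pow V E 4 / 4 - 2 * M2 E - 5 / 4 * m * M1_pow V E 2 + 7 / 2 * M1_pow V E 2
        - EM2 E - 3 / 2 * M1_pow V E 3"
    by (rule final_alg[OF T2_lin[folded m_def] A0 A1 A2 A11 X0 X1 ev_S1[OF sg] ev_S2[OF sg] ev_S3[OF sg] ev_EM2[OF sg] T])
  thus ?thesis unfolding m_def Let_def .
qed

end

theorem theorem2p9:
  fixes V :: "'a set" and E :: "'a set set"
  assumes "simple_graph V E"
    and "girth E \<ge> 5"
  shows "real (num_matchings E 4) =
     (let m = real (card E); M1 = M1_pow V E 2; F = M1_pow V E 3; M14 = M1_pow V E 4 in
        m ^ 4 / 24 + m ^ 3 / 4 + 19 / 24 * m ^ 2 - 11 / 4 * m + M1 ^ 2 / 8 + m * F / 3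
        - m ^ 2 * M1 / 4 + m * M2 E + M14 / 4 - 2 * M2 E - 5 / 4 * m * M1 + 7 / 2 * M1
        - EM2 E - 3 / 2 * F)"
  unfolding num_matchings_def using main[OF assms] .

end
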